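(* Let $n\ge1$ and $w\in\mathfrak S_n\subset\widehat{\mathfrak S}_n$. Let $\gamma\in\widehat{\mathfrak S}_n$ be translation by $-\rho=(0,-1,\dots,1-n)$. Then there are bijections \[ \alpha:\operatorname{Inv}(w)\to\operatorname{Inv}_0(\gamma^{-1}w\gamma),\quad (i,j)\mapsto(i,\,j+(j-i)n), \] \[ \beta:\operatorname{Inv}(w)\to\operatorname{Inv}_\infty(\gamma^{-1}w\gamma),\quad (i,j)\mapsto(i,\,j+(j-i+1)n). \]
   Context: $\widehat{\mathfrak S}_n$ (extended affine symmetric group) is the group of bijections $w:\mathbb Z\to\mathbb Z$ with $w(i+n)=w(i)+n$ for all $i$, under composition; $\mathfrak S_n$ embeds as those $w$ permuting $\{1,\dots,n\}$. For $\beta\in\mathbb Z^n$, translation by $\beta$ is $i\mapsto i+n\beta_{i\bmod n}$; thus $\gamma(i)=i+n(1-i)$ for $1\le i\le n$. For an affine permutation $u$, $\operatorname{Inv}(u)=\{(i,j)\in\{1,\dots,n\}\times\mathbb Z: i<j,\ u(i)>u(j)\}$. An inversion $(i,j)$ is vanishing if $j-i\equiv0\bmod(n+1)$ and singular if $j-i\equiv n\bmod(n+1)$; $\operatorname{Inv}_0(u)$ and $\operatorname{Inv}_\infty(u)$ denote the sets of vanishing and singular inversions. *)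

theory Defs
  imports Main
begin

text \<open>Extended affine permutations of period n, as maps int to int.\<close>
definition affine_perm :: "int \<Rightarrow> (int \<Rightarrow> int) \<Rightarrow> bool" where
  "affine_perm n w \<longleftrightarrow> bij w \<and> (\<forall>i. w (i + n) = w i + n)"

definition fin_perm :: "int \<Rightarrow> (int \<Rightarrow> int) \<Rightarrow> bool" where
  "fin_perm n w \<longleftrightarrow> affine_perm n w \<and> w ` {1..n} = {1..n}"

definition res :: "int \<Rightarrow> int \<Rightarrow> int" where
  "res n i = (i - 1) mod n + 1"

definition translation :: "int \<Rightarrow> (int \<Rightarrow> int) \<Rightarrow> int \<Rightarrow> int" where
  "translation n b i = i + n * b (res n i)"

text \<open>gamma = translation by -rho = (0,-1,...,1-n), i.e. beta_k = 1 - k.\<close>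
definition gamma :: "int \<Rightarrow> int \<Rightarrow> int" where
  "gamma n = translation n (\<lambda>k. 1 - k)"

definition Inv :: "int \<Rightarrow> (int \<Rightarrow> int) \<Rightarrow> (int \<times> int) set" where
  "Inv n u = {(i, j). 1 \<le> i \<and> i \<le> n \<and> i < j \<and> u i > u j}"

definition Inv0 :: "int \<Rightarrow> (int \<Rightarrow> int) \<Rightarrow> (int \<times> int) set" where
  "Inv0 n u = {(i, j). (i, j) \<in> Inv n u \<and> (j - i) mod (n + 1) = 0}"

definition Inv_inf :: "int \<Rightarrow> (int \<Rightarrow> int) \<Rightarrow> (int \<times> int) set" where
  "Inv_inf n u = {(i, j). (i, j) \<in> Inv n u \<and> (j - i) mod (n + 1) = n mod (n + 1)}"

end

theory Submission
  imports Defs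
begin

lemma res_add: "res n (a + k * n) = res n a"
proof -
  have e: "a + k * n - 1 = (a - 1) + k * n" by simp
  show ?thesis by (simp only: res_def e mod_mult_self1)
qed

lemma res_id: "1 \<le> a \<Longrightarrow> a \<le> n \<Longrightarrow> res n a = a"
  unfolding res_def by simp

lemma res_decomp: "x = res n x + ((x - 1) div n) * n"
  unfolding res_def using div_mult_mod_eq[of "x - 1" n] by linarith

lemma res_range: "n \<ge> 1 \<Longrightarrow> res n x \<in> {1..n}"
proof -
  assume "n \<ge> 1"
  then have p: "0 < n" by simp
  have "(x - 1) mod n < n" using p by simp
  moreover have "0 \<le> (x - 1) mod n" using p by simp
  ultimately show ?thesis unfolding res_def by simp
qed

lemma periodic:
  assumes "affine_perm n w"
  shows "w (y + k * n) = w y + k * n"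
proof (induction k rule: int_induct[where k=0])
  case base then show ?case by simp
next
  case (step1 i)
  have "w (y + (i+1)*n) = w ((y + i*n) + n)" by (simp add: algebra_simps)
  also have "\<dots> = w (y + i*n) + n" using assms unfolding affine_perm_def by blast
  finally show ?case using step1 by (simp add: algebra_simps)
next
  case (step2 i)
  have "w (y + i*n) = w ((y + (i - 1)*n) + n)" by (simp add: algebra_simps)
  also have "\<dots> = w (y + (i - 1)*n) + n" using assms unfolding affine_perm_def by blast
  finally show ?case using step2 by (simp add: algebra_simps)
qed

lemma w_res:
  assumes "affine_perm n w"
  shows "w x = w (res n x) + (x - res n x)"
proof -
  have "w x = w (res n x + ((x - 1) div n) * n)" using arg_cong[OF res_decomp[of x n], of w] .
  also have "\<dots> = w (res n x) + ((x - 1) div n) * n" using periodic[OF assms] by blast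
  moreover have d: "x - res n x = ((x - 1) div n) * n" using res_decomp[of x n] by linarith
  ultimately show ?thesis by simp
qed

lemma gamma_eq: "gamma n x = x + n * (1 - res n x)"
  unfolding gamma_def translation_def by simp

lemma res_gamma: "res n (gamma n x) = res n x"
  unfolding gamma_eq using res_add[of n x "1 - res n x"] by (simp add: mult.commute)

lemma inj_gamma: "inj (gamma n)"
proof (rule injI)
  fix x y assume h: "gamma n x = gamma n y"
  then have "res n x = res n y" by (metis res_gamma)
  with h show "x = y" unfolding gamma_eq by simp
qed

lemma u_formula:
  assumes n: "n \<ge> 1" and fp: "fin_perm n w"
  shows "(inv (gamma n) \<circ> w \<circ> gamma n) x = (n+1) * w x - n * x"
proof -
  have ap: "affine_perm n w" using fp unfolding fin_perm_def by blast
  have wr: "w (res n x) \<in> {1..n}" using fp res_range[OF n, of x] unfolding fin_perm_def by blast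
  have wx: "w x = w (res n x) + (x - res n x)" using w_res[OF ap] .
  have d: "x - res n x = ((x - 1) div n) * n" using res_decomp[of x n] by linarith
  have "res n (w x) = res n (w (res n x) + ((x - 1) div n) * n)" using wx d by simp
  also have "\<dots> = res n (w (res n x))" using res_add by blast
  finally have "res n (w x) = res n (w (res n x))" .
  also have "\<dots> = w (res n x)" using wr res_id by auto
  finally have r1: "res n (w x) = w (res n x)" .
  have "res n ((n+1) * w x - n * x) = res n (w x + (w x - x) * n)" by (simp add: algebra_simps)
  also have "\<dots> = w (res n x)" using res_add r1 by simp
  finally have r2: "res n ((n+1) * w x - n * x) = w (res n x)" .
  have g1: "gamma n ((n+1) * w x - n * x) = (n+1) * w x - n * x + n * (1 - w (res n x))"
    using r2 gamma_eq by simp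
  have "w (gamma n x) = w (x + (1 - res n x) * n)" by (simp add: gamma_eq mult.commute)
  also have "\<dots> = w x + (1 - res n x) * n" using periodic[OF ap] by blast
  finally have g2: "w (gamma n x) = w x + (1 - res n x) * n" .
  have ar: "(n+1) * w x - n * x + n * (1 - w (res n x)) = w x + (1 - res n x) * n"
  proof -
    have "(n+1) * w x - n * x + n * (1 - w (res n x)) = (n+1) * (w (res n x) + (x - res n x)) - n * x + n * (1 - w (res n x))"
      using wx by simp
    also have "\<dots> = (w (res n x) + (x - res n x)) + (1 - res n x) * n" by (simp add: algebra_simps)
    finally show ?thesis using wx by simp
  qed
  have "gamma n ((n+1) * w x - n * x) = w (gamma n x)"
    by (simp only: g1 ar g2)
  then have "inv (gamma n) (w (gamma n x)) = inv (gamma n) (gamma n ((n+1) * w x - n * x))" by simp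
  also have "\<dots> = (n+1) * w x - n * x" using inj_gamma inv_f_f by metis
  finally show ?thesis by simp
qed

theorem lemma6p9:
  fixes n :: int and w :: "int \<Rightarrow> int"
  assumes "n \<ge> 1" and "fin_perm n w"
  shows "bij_betw (\<lambda>(i, j). (i, j + (j - i) * n)) (Inv n w)
           (Inv0 n (inv (gamma n) \<circ> w \<circ> gamma n))
       \<and> bij_betw (\<lambda>(i, j). (i, j + (j - i + 1) * n)) (Inv n w)
           (Inv_inf n (inv (gamma n) \<circ> w \<circ> gamma n))"
proof -
  define u where "u = inv (gamma n) \<circ> w \<circ> gamma n"
  have ap: "affine_perm n w" using assms(2) unfolding fin_perm_def by blast
  have U: "\<And>x. u x = (n+1) * w x - n * x" unfolding u_def using u_formula[OF assms] .
  have A: "\<And>i j. u (j + (j - i) * n) = (n+1) * w j - n * i"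
  proof -
    fix i j
    have "w (j + (j - i) * n) = w j + (j - i) * n" using periodic[OF ap] by blast
    moreover have "u (j + (j - i) * n) = (n+1) * w (j + (j - i) * n) - n * (j + (j - i) * n)" using U by blast
    ultimately have "u (j + (j - i) * n) = (n+1) * (w j + (j - i) * n) - n * (j + (j - i) * n)" by simp
    also have "\<dots> = (n+1) * w j - n * i" by (simp add: algebra_simps)
    finally show "u (j + (j - i) * n) = (n+1) * w j - n * i" .
  qed
  have B: "\<And>i j. u (j + (j - i + 1) * n) = (n+1) * w j - n * i + n"
  proof -
    fix i j
    have "w (j + (j - i + 1) * n) = w j + (j - i + 1) * n" using periodic[OF ap] by blast
    moreover have "u (j + (j - i + 1) * n) = (n+1) * w (j + (j - i + 1) * n) - n * (j + (j - i + 1) * n)" using U by blast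
    ultimately have "u (j + (j - i + 1) * n) = (n+1) * (w j + (j - i + 1) * n) - n * (j + (j - i + 1) * n)" by simp
    also have "\<dots> = (n+1) * w j - n * i + n" by (simp add: algebra_simps)
    finally show "u (j + (j - i + 1) * n) = (n+1) * w j - n * i + n" .
  qed
  have inj1: "inj_on (\<lambda>(i, j). (i, j + (j - i) * n)) X" for X
  proof (rule inj_onI)
    fix p q assume h: "(\<lambda>(i, j). (i, j + (j - i) * n)) p = (\<lambda>(i, j). (i, j + (j - i) * n)) q"
    obtain a b where p: "p = (a, b)" by force
    obtain c d where q: "q = (c, d)" by force
    from h have ace: "(a, b + (b - a) * n) = (c, d + (d - c) * n)" unfolding p q by (simp only: prod.case)
    then have ac: "a = c" and e: "b + (b - a) * n = d + (d - c) * n" by (metis prod.inject)+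
    from e ac have "(b - d) * (n + 1) = 0" by (simp add: algebra_simps)
    then have "b = d" using assms(1) by simp
    then show "p = q" using p q ac by simp
  qed
  have inj2: "inj_on (\<lambda>(i, j). (i, j + (j - i + 1) * n)) X" for X
  proof (rule inj_onI)
    fix p q assume h: "(\<lambda>(i, j). (i, j + (j - i + 1) * n)) p = (\<lambda>(i, j). (i, j + (j - i + 1) * n)) q"
    obtain a b where p: "p = (a, b)" by force
    obtain c d where q: "q = (c, d)" by force
    from h have ace: "(a, b + (b - a + 1) * n) = (c, d + (d - c + 1) * n)" unfolding p q by (simp only: prod.case)
    then have ac: "a = c" and e: "b + (b - a + 1) * n = d + (d - c + 1) * n" by (metis prod.inject)+
    from e ac have "(b - d) * (n + 1) = 0" by (simp add: algebra_simps)
    then have "b = d" using assms(1) by simp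
    then show "p = q" using p q ac by simp
  qed
  have im1: "(\<lambda>(i, j). (i, j + (j - i) * n)) ` Inv n w = Inv0 n u"
  proof
    show "(\<lambda>(i, j). (i, j + (j - i) * n)) ` Inv n w \<subseteq> Inv0 n u"
    proof
      fix x assume "x \<in> (\<lambda>(i, j). (i, j + (j - i) * n)) ` Inv n w"
      then obtain p where hp: "p \<in> Inv n w" and xp: "x = (\<lambda>(i, j). (i, j + (j - i) * n)) p" by (rule imageE)
      obtain i j where pij: "p = (i, j)" by (cases p)
      have x: "x = (i, j + (j - i) * n)" using xp pij by simp
      have h: "(i, j) \<in> Inv n w" using hp pij by simp
      have i1: "1 \<le> i" "i \<le> n" "i < j" "w j < w i" using h unfolding Inv_def by simp_all
      have e: "j + (j - i) * n - i = (j - i) * (n+1)" by (simp add: algebra_simps)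
      have "(j - i) * n \<ge> 0" using i1 assms(1) by simp
      then have lt: "i < j + (j - i) * n" using i1 by linarith
      have "(n+1) * w j < (n+1) * w i" using i1 assms(1) by simp
      then have ul: "u (j + (j - i) * n) < u i" using A[of j i] U[of i] by linarith
      have md: "(j + (j - i) * n - i) mod (n+1) = 0" unfolding e by simp
      show "x \<in> Inv0 n u" unfolding x Inv0_def Inv_def using i1 lt ul md by simp
    qed
  next
    show "Inv0 n u \<subseteq> (\<lambda>(i, j). (i, j + (j - i) * n)) ` Inv n w"
    proof
      fix x assume hx: "x \<in> Inv0 n u"
      obtain i j' where x: "x = (i, j')" by (cases x)
      have h: "(i, j') \<in> Inv0 n u" using hx x by simp
      have h1: "(i, j') \<in> Inv n u" and h2: "(j' - i) mod (n+1) = 0"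
        using h unfolding Inv0_def by simp_all
      have i1: "1 \<le> i" "i \<le> n" "i < j'" "u j' < u i" "(j' - i) mod (n+1) = 0"
        using h1 h2 unfolding Inv_def by simp_all
      then have "(n+1) dvd (j' - i)" by (simp add: dvd_eq_mod_eq_0)
      then obtain m where m: "j' - i = (n+1) * m" by blast
      define j where "j = i + m"
      have jj: "j' = j + (j - i) * n" using m unfolding j_def by (simp add: algebra_simps)
      have "(n+1) * m > 0" using m i1 by linarith
      then have "m > 0" using assms(1) by (simp add: zero_less_mult_iff)
      then have ij: "i < j" unfolding j_def by simp
      have "u (j + (j - i) * n) < u i" using i1 jj by simp
      then have "(n+1) * w j < (n+1) * w i" using A[of j i] U[of i] by linarith
      then have "w j < w i" using assms(1) by (simp add: mult_less_cancel_left)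
      then have hI: "(i, j) \<in> Inv n w" using i1 ij unfolding Inv_def by simp
      have fx: "x = (\<lambda>(i, j). (i, j + (j - i) * n)) (i, j)" unfolding x jj by simp
      show "x \<in> (\<lambda>(i, j). (i, j + (j - i) * n)) ` Inv n w"
        unfolding fx by (rule imageI[OF hI])
    qed
  qed
  have im2: "(\<lambda>(i, j). (i, j + (j - i + 1) * n)) ` Inv n w = Inv_inf n u"
  proof
    show "(\<lambda>(i, j). (i, j + (j - i + 1) * n)) ` Inv n w \<subseteq> Inv_inf n u"
    proof
      fix x assume "x \<in> (\<lambda>(i, j). (i, j + (j - i + 1) * n)) ` Inv n w"
      then obtain p where hp: "p \<in> Inv n w" and xp: "x = (\<lambda>(i, j). (i, j + (j - i + 1) * n)) p" by (rule imageE)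
      obtain i j where pij: "p = (i, j)" by (cases p)
      have x: "x = (i, j + (j - i + 1) * n)" using xp pij by simp
      have h: "(i, j) \<in> Inv n w" using hp pij by simp
      have i1: "1 \<le> i" "i \<le> n" "i < j" "w j < w i" using h unfolding Inv_def by simp_all
      have e: "j + (j - i + 1) * n - i = n + (j - i) * (n+1)" by (simp add: algebra_simps)
      have "(j - i + 1) * n \<ge> 0" using i1 assms(1) by simp
      then have lt: "i < j + (j - i + 1) * n" using i1 by linarith
      have "w j + 1 \<le> w i" using i1 by simp
      then have "(n+1) * (w j + 1) \<le> (n+1) * w i" using assms(1) by simp
      then have ul: "u (j + (j - i + 1) * n) < u i" using B[of j i] U[of i] by (simp add: algebra_simps)
      have md: "(j + (j - i + 1) * n - i) mod (n+1) = n mod (n+1)" unfolding e by simp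
      show "x \<in> Inv_inf n u" unfolding x Inv_inf_def Inv_def using i1 lt ul md by simp
    qed
  next
    show "Inv_inf n u \<subseteq> (\<lambda>(i, j). (i, j + (j - i + 1) * n)) ` Inv n w"
    proof
      fix x assume hx: "x \<in> Inv_inf n u"
      obtain i j' where x: "x = (i, j')" by (cases x)
      have h: "(i, j') \<in> Inv_inf n u" using hx x by simp
      have h1: "(i, j') \<in> Inv n u" and h2: "(j' - i) mod (n+1) = n mod (n+1)"
        using h unfolding Inv_inf_def by simp_all
      have i1: "1 \<le> i" "i \<le> n" "i < j'" "u j' < u i" "(j' - i) mod (n+1) = n mod (n+1)"
        using h1 h2 unfolding Inv_def by simp_all
      then have "(j' - i + 1) mod (n+1) = (n + 1) mod (n+1)" by (metis mod_add_left_eq)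
      then have "(n+1) dvd (j' - i + 1)" by (simp add: dvd_eq_mod_eq_0)
      then obtain m where m: "j' - i + 1 = (n+1) * m" by blast
      define j where "j = i + m - 1"
      have jj: "j' = j + (j - i + 1) * n" using m unfolding j_def by (simp add: algebra_simps)
      have "(n+1) * m > 0" using m i1 by linarith
      then have "m > 0" using assms(1) by (simp add: zero_less_mult_iff)
      then have ij: "i \<le> j" unfolding j_def by simp
      have "u (j + (j - i + 1) * n) < u i" using i1 jj by simp
      then have lt: "(n+1) * w j + n < (n+1) * w i" using B[of j i] U[of i] by linarith
      have wl: "w j < w i"
      proof (rule ccontr)
        assume "\<not> w j < w i"
        then have "(n+1) * w i \<le> (n+1) * w j" using assms(1) by simp
        then show False using lt assms(1) by linarith
      qed
      then have "i \<noteq> j" by auto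
      with ij have "i < j" by simp
      then have hI: "(i, j) \<in> Inv n w" using i1 wl unfolding Inv_def by simp
      have fx: "x = (\<lambda>(i, j). (i, j + (j - i + 1) * n)) (i, j)" unfolding x jj by simp
      show "x \<in> (\<lambda>(i, j). (i, j + (j - i + 1) * n)) ` Inv n w"
        unfolding fx by (rule imageI[OF hI])
    qed
  qed
  show ?thesis unfolding u_def[symmetric] bij_betw_def using inj1 inj2 im1 im2 by blast
qed

end
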